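(* Let $r$ denote either the max rank or the submax rank. If $\mathscr X\in\mathbb R^{I_1\times\cdots\times I_N}$ is a nonzero tensor, then there is a subtensor $\mathscr Y\in\mathbb R^{J_1\times\cdots\times J_N}$ of $\mathscr X$ such that $r(\mathscr X)=r(\mathscr Y)=J_n$ for some $n$ with $1\leq n\leq N$.
   Context: All tensors are real. For $\mathscr X\in\mathbb R^{I_1\times\cdots\times I_N}$, the mode-$n$ unfolding $\mathbf X_{(n)}$ is the $I_n\times\prod_{k\neq n}I_k$ matrix whose rows are indexed by $i_n$ and whose columns are exactly the vectors obtained from $\mathscr X$ by fixing all indices other than $i_n$; let $R_n=\operatorname{rank}(\mathbf X_{(n)})$. The max rank is $r(\mathscr X)=\max\{R_1,\dots,R_N\}$. The submax rank is $r(\mathscr X)=\operatorname{submax}\{R_1,\dots,R_N\}$, where for $N>1$ the submax of a multiset is its second largest value counted with multiplicity (e.g. $\operatorname{submax}\{1,2,3,3\}=3$), and $\operatorname{submax}\{R_1\}=R_1$ if $N=1$. A subtensor of $\mathscr X$ is a tensor $\mathscr Y\in\mathbb R^{J_1\times\cdots\times J_N}$ with $1\le J_n\le I_n$ of the form $y_{j_1\cdots j_N}=x_{i_{1j_1}\cdots i_{Nj_N}}$ for some indices $1\leq i_{n1}<\cdots<i_{nJ_n}\leq I_n$. *)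

theory Defs
  imports "HOL-Analysis.Analysis" "HOL-Library.Function_Algebras"
begin

text \<open>An order-N real tensor with dimensions I 0, ..., I (N-1) (0-based modes and indices)
  is a function on multi-indices; only its values on tidx N I matter.\<close>

definition tidx :: "nat \<Rightarrow> (nat \<Rightarrow> nat) \<Rightarrow> (nat \<Rightarrow> nat) set" where
  "tidx N I = PiE {..<N} (\<lambda>n. {..<I n})"

text \<open>Mode-n fiber through multi-index i: a column of the mode-n unfolding, as a vector
  in R^(I n) represented by a function nat => real vanishing outside {..<I n}.\<close>

definition fiber :: "nat \<Rightarrow> (nat \<Rightarrow> nat) \<Rightarrow> ((nat \<Rightarrow> nat) \<Rightarrow> real) \<Rightarrow> nat \<Rightarrow> (nat \<Rightarrow> nat) \<Rightarrow> (nat \<Rightarrow> real)" where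
  "fiber N I X n i = (\<lambda>k. if k < I n then X (i(n := k)) else 0)"

text \<open>Rank of the mode-n unfolding = dimension of its column space.\<close>

definition mode_rank :: "nat \<Rightarrow> (nat \<Rightarrow> nat) \<Rightarrow> ((nat \<Rightarrow> nat) \<Rightarrow> real) \<Rightarrow> nat \<Rightarrow> nat" where
  "mode_rank N I X n =
     vector_space.dim (\<lambda>(c::real) (v::nat \<Rightarrow> real) x. c * v x) {fiber N I X n i | i. i \<in> tidx N I}"

definition max_rank :: "nat \<Rightarrow> (nat \<Rightarrow> nat) \<Rightarrow> ((nat \<Rightarrow> nat) \<Rightarrow> real) \<Rightarrow> nat" where
  "max_rank N I X = Max (mode_rank N I X ` {..<N})"

definition submax_rank :: "nat \<Rightarrow> (nat \<Rightarrow> nat) \<Rightarrow> ((nat \<Rightarrow> nat) \<Rightarrow> real) \<Rightarrow> nat" where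
  "submax_rank N I X =
     (if N = 1 then mode_rank N I X 0 else rev (sort (map (mode_rank N I X) [0..<N])) ! 1)"

definition is_subtensor :: "nat \<Rightarrow> (nat \<Rightarrow> nat) \<Rightarrow> ((nat \<Rightarrow> nat) \<Rightarrow> real)
    \<Rightarrow> (nat \<Rightarrow> nat) \<Rightarrow> ((nat \<Rightarrow> nat) \<Rightarrow> real) \<Rightarrow> bool" where
  "is_subtensor N I X J Y \<longleftrightarrow>
     (\<exists>\<sigma> :: nat \<Rightarrow> nat \<Rightarrow> nat.
        (\<forall>n<N. 1 \<le> J n \<and> J n \<le> I n \<and> strict_mono_on {..<J n} (\<sigma> n)
               \<and> \<sigma> n ` {..<J n} \<subseteq> {..<I n}) \<and>
        (\<forall>j \<in> tidx N J. Y j = X (\<lambda>n\<in>{..<N}. \<sigma> n (j n))))"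

end

theory Submission imports Defs begin

interpretation fv: vector_space "(\<lambda>(c::real) (v::nat \<Rightarrow> real) x. c * v x)"
  by unfold_locales (auto simp: fun_eq_iff algebra_simps)

lemma sum_fun_apply: "(sum f A) (x::'b) = (\<Sum>a\<in>A. (f a x :: real))"
  by (induction A rule: infinite_finite_induct) auto

lemma fv_dim_mono:
  assumes "finite W" "V \<subseteq> fv.span W"
  shows "fv.dim V \<le> fv.dim W"
proof -
  obtain BV where BV: "BV \<subseteq> V" "fv.independent BV" "V \<subseteq> fv.span BV" "card BV = fv.dim V"
    using fv.basis_exists by blast
  obtain BW where BW: "BW \<subseteq> W" "fv.independent BW" "W \<subseteq> fv.span BW" "card BW = fv.dim W"
    using fv.basis_exists by blast
  have "finite BW" using BW(1) assms(1) finite_subset by blast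
  have "BV \<subseteq> fv.span BW"
    using BV(1) assms(2) fv.span_minimal[OF BW(3) fv.subspace_span] by blast
  then show ?thesis using fv.independent_span_bound[OF \<open>finite BW\<close> BV(2)] BV BW by simp
qed

lemma fv_indep_le_dim:
  assumes "finite W" "fv.independent T" "T \<subseteq> fv.span W"
  shows "card T \<le> fv.dim W"
proof -
  obtain BW where BW: "BW \<subseteq> W" "fv.independent BW" "W \<subseteq> fv.span BW" "card BW = fv.dim W"
    using fv.basis_exists by blast
  have "finite BW" using BW(1) assms(1) finite_subset by blast
  have "T \<subseteq> fv.span BW"
    using assms(3) fv.span_minimal[OF BW(3) fv.subspace_span] by blast
  then show ?thesis using fv.independent_span_bound[OF \<open>finite BW\<close> assms(2)] BW by simp
qed

lemma gauss:
  assumes "finite B" "fv.independent B" "\<forall>b\<in>B. \<forall>x\<ge>m. b x = 0"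
  shows "\<exists>S u. S \<subseteq> {..<m} \<and> card S = card B \<and> (\<forall>s\<in>S. u s \<in> fv.span B)
     \<and> (\<forall>s\<in>S. \<forall>x\<ge>m. u s x = 0)
     \<and> (\<forall>s\<in>S. \<forall>t\<in>S. u s t = (if s = t then 1 else 0))"
  using assms
proof (induction B rule: finite_induct)
  case empty
  show ?case by (rule exI[of _ "{}"]) simp
next
  case (insert b B)
  have indB: "fv.independent B" and bnot: "b \<notin> fv.span B"
    using insert.prems(1) insert.hyps(2) fv.independent_insert by auto
  obtain S u where S: "S \<subseteq> {..<m}" "card S = card B" "\<forall>s\<in>S. u s \<in> fv.span B"
     "\<forall>s\<in>S. \<forall>x\<ge>m. u s x = 0" "\<forall>s\<in>S. \<forall>t\<in>S. u s t = (if s = t then 1 else 0)"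
    using insert.IH[OF indB] insert.prems(2) by blast
  have finS: "finite S" using S(1) finite_subset by blast
  define w where "w = (\<Sum>s\<in>S. (\<lambda>x. b s * u s x))"
  have wapp: "w x = (\<Sum>s\<in>S. b s * u s x)" for x
    unfolding w_def sum_fun_apply ..
  have wspan: "w \<in> fv.span B"
    unfolding w_def by (rule fv.span_sum) (use S(3) fv.span_scale in auto)
  define c where "c = b - w"
  have capp: "c x = b x - (\<Sum>s\<in>S. b s * u s x)" for x
    unfolding c_def wapp by simp
  have cS: "c s0 = 0" if "s0 \<in> S" for s0
  proof -
    have "(\<Sum>s\<in>S. b s * u s s0) = (\<Sum>s\<in>S. if s = s0 then b s else 0)"
      using S(5) that by (intro sum.cong) auto
    also have "\<dots> = b s0" using finS that by simp
    finally show ?thesis using capp by simp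
  qed
  have cm: "c x = 0" if "x \<ge> m" for x
    using capp S(4) insert.prems(2) that by simp
  have "c \<noteq> 0"
  proof
    assume "c = 0"
    then have "b = w" unfolding c_def by simp
    then show False using wspan bnot by simp
  qed
  then obtain t where ct: "c t \<noteq> 0" by (auto simp: fun_eq_iff)
  have tm: "t < m" using cm ct by (meson not_less)
  have tS: "t \<notin> S" using cS ct by blast
  have cspan: "c \<in> fv.span (insert b B)"
    unfolding c_def
    by (rule fv.span_diff) (auto intro: fv.span_base set_mp[OF fv.span_mono[of B "insert b B"] wspan])
  define d where "d = (\<lambda>x. c x / c t)"
  have dspan: "d \<in> fv.span (insert b B)"
  proof -
    have "d = (\<lambda>x. (1 / c t) * c x)"
      unfolding d_def by (auto simp: fun_eq_iff)
    then show ?thesis using fv.span_scale[OF cspan, of "1 / c t"] by simp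
  qed
  define u' where "u' = (\<lambda>s. if s = t then d else (\<lambda>x. u s x - u s t * d x))"
  show ?case
  proof (intro exI[of _ "insert t S"] exI[of _ u'] conjI ballI allI impI)
    show "insert t S \<subseteq> {..<m}" using S(1) tm by auto
    show "card (insert t S) = card (insert b B)"
      using finS tS S(2) insert.hyps by simp
  next
    fix s assume s: "s \<in> insert t S"
    show "u' s \<in> fv.span (insert b B)"
    proof (cases "s = t")
      case True then show ?thesis using dspan by (simp add: u'_def)
    next
      case False
      then have sS: "s \<in> S" using s by auto
      have us: "u s \<in> fv.span (insert b B)"
        using S(3) sS fv.span_mono[of B "insert b B"] by blast
      have "(\<lambda>x. u s x - u s t * d x) = u s - (\<lambda>(c::real) (v::nat \<Rightarrow> real) x. c * v x) (u s t) d"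
        by (auto simp: fun_eq_iff)
      also have "\<dots> \<in> fv.span (insert b B)"
        by (rule fv.span_diff[OF us fv.span_scale[OF dspan]])
      finally show ?thesis using False by (simp add: u'_def)
    qed
  next
    fix s x assume s: "s \<in> insert t S" and x: "m \<le> x"
    show "u' s x = 0"
      using s x cm S(4) by (auto simp: u'_def d_def)
  next
    fix s s' assume s: "s \<in> insert t S" and s': "s' \<in> insert t S"
    show "u' s s' = (if s = s' then 1 else 0)"
      using s s' S(5) cS ct tS by (auto simp: u'_def d_def)
  qed
qed

lemma recon:
  assumes "finite B" "fv.independent B" "finite S" "card S = card B"
    and "\<forall>s\<in>S. u s \<in> fv.span B"
    and "\<forall>s\<in>S. \<forall>t\<in>S. u s t = (if s = t then 1 else 0)"
    and "v \<in> fv.span B"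
  shows "v x = (\<Sum>s\<in>S. v s * u s x)"
proof -
  have inj: "inj_on u S"
  proof (rule inj_onI)
    fix s s' assume "s \<in> S" "s' \<in> S" "u s = u s'"
    then have "u s s = u s' s" by simp
    then show "s = s'" using assms(6) \<open>s \<in> S\<close> \<open>s' \<in> S\<close> by (auto split: if_splits)
  qed
  define U where "U = u ` S"
  have finU: "finite U" using assms(3) U_def by simp
  have cardU: "card U = card B" using card_image[OF inj] assms(4) U_def by simp
  have sumU: "(\<Sum>w\<in>U. f w) = (\<Sum>s\<in>S. f (u s))" for f :: "(nat \<Rightarrow> real) \<Rightarrow> real"
    unfolding U_def by (rule sum.reindex[OF inj, unfolded comp_def])
  have sumU': "(\<Sum>w\<in>U. f w) = (\<Sum>s\<in>S. f (u s))" for f :: "(nat \<Rightarrow> real) \<Rightarrow> (nat \<Rightarrow> real)"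
    unfolding U_def by (rule sum.reindex[OF inj, unfolded comp_def])
  have evalS: "(\<Sum>s\<in>S. c s * u s s0) = c s0" if "s0 \<in> S" for c s0
  proof -
    have "(\<Sum>s\<in>S. c s * u s s0) = (\<Sum>s\<in>S. if s = s0 then c s else 0)"
      using assms(6) that by (intro sum.cong) auto
    also have "\<dots> = c s0" using assms(3) that by simp
    finally show ?thesis .
  qed
  have indU: "fv.independent U"
  proof
    assume "fv.dependent U"
    then obtain c where c: "\<exists>w\<in>U. c w \<noteq> 0" "(\<Sum>w\<in>U. (\<lambda>x. c w * w x)) = 0"
      using fv.dependent_finite[OF finU] by blast
    from c(1) obtain s0 where s0: "s0 \<in> S" "c (u s0) \<noteq> 0" unfolding U_def by blast
    have "0 = (\<Sum>w\<in>U. (\<lambda>x. c w * w x)) s0" using c(2) by simp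
    also have "\<dots> = (\<Sum>s\<in>S. c (u s) * u s s0)" unfolding sum_fun_apply sumU by simp
    also have "\<dots> = c (u s0)" using evalS[OF s0(1), of "\<lambda>s. c (u s)"] .
    finally show False using s0(2) by simp
  qed
  have USB: "U \<subseteq> fv.span B" using assms(5) U_def by auto
  have "v \<in> fv.span U"
  proof (rule ccontr)
    assume "v \<notin> fv.span U"
    then have i: "fv.independent (insert v U)" using fv.independent_insertI indU by blast
    have "v \<notin> U" using \<open>v \<notin> fv.span U\<close> fv.span_base by blast
    have "insert v U \<subseteq> fv.span B" using USB assms(7) by blast
    from fv.independent_span_bound[OF assms(1) i this]
    have "card (insert v U) \<le> card B" by simp
    then show False using finU \<open>v \<notin> U\<close> cardU by simp
  qed
  then obtain c where c: "v = (\<Sum>w\<in>U. (\<lambda>x. c w * w x))"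
    using fv.span_finite[OF finU] by blast
  have vx: "v y = (\<Sum>s\<in>S. c (u s) * u s y)" for y
    unfolding c sum_fun_apply sumU by simp
  show ?thesis
    unfolding vx[of x] by (intro sum.cong refl) (simp add: vx evalS)
qed

lemma r_cong:
  assumes "\<forall>k<N. mode_rank N J Y k = mode_rank N I X k" "N \<ge> 1"
  shows "max_rank N J Y = max_rank N I X" "submax_rank N J Y = submax_rank N I X"
proof -
  show "max_rank N J Y = max_rank N I X"
    unfolding max_rank_def using assms(1) by (metis (no_types, lifting) image_cong lessThan_iff)
  have "map (mode_rank N J Y) [0..<N] = map (mode_rank N I X) [0..<N]"
    using assms(1) by (intro map_cong) auto
  then show "submax_rank N J Y = submax_rank N I X"
    unfolding submax_rank_def using assms by (metis less_one)
qed

lemma r_attained: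
  assumes "N \<ge> 1" "r = max_rank \<or> r = submax_rank"
  shows "\<exists>n0<N. r N I X = mode_rank N I X n0"
proof (cases "r = max_rank")
  case True
  have "Max (mode_rank N I X ` {..<N}) \<in> mode_rank N I X ` {..<N}"
    using assms(1) by (intro Max_in) (auto simp: lessThan_empty_iff)
  then show ?thesis using True unfolding max_rank_def by auto
next
  case False
  then have r: "r = submax_rank" using assms(2) by simp
  show ?thesis
  proof (cases "N = 1")
    case True then show ?thesis using r by (simp add: submax_rank_def)
  next
    case False
    let ?xs = "rev (sort (map (mode_rank N I X) [0..<N]))"
    have "?xs ! 1 \<in> set ?xs" using False assms(1) by (intro nth_mem) simp
    then have "?xs ! 1 \<in> mode_rank N I X ` {..<N}" by auto
    then show ?thesis using r False unfolding submax_rank_def by auto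
  qed
qed

lemma delta_indep:
  assumes "finite S" "\<forall>s\<in>S. \<forall>t\<in>S. u s t = (if s = t then (1::real) else 0)"
  shows "fv.independent (u ` S)" "inj_on u S"
proof -
  show inj: "inj_on u S"
  proof (rule inj_onI)
    fix s s' assume "s \<in> S" "s' \<in> S" "u s = u s'"
    then have "u s s = u s' s" by simp
    then show "s = s'" using assms(2) \<open>s \<in> S\<close> \<open>s' \<in> S\<close> by (auto split: if_splits)
  qed
  have sumU: "(\<Sum>w\<in>u ` S. f w) = (\<Sum>s\<in>S. f (u s))" for f :: "(nat \<Rightarrow> real) \<Rightarrow> real"
    by (rule sum.reindex[OF inj, unfolded comp_def])
  have evalS: "(\<Sum>s\<in>S. c s * u s s0) = c s0" if "s0 \<in> S" for c s0
  proof -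
    have "(\<Sum>s\<in>S. c s * u s s0) = (\<Sum>s\<in>S. if s = s0 then c s else 0)"
      using assms(2) that by (intro sum.cong) auto
    also have "\<dots> = c s0" using assms(1) that by simp
    finally show ?thesis .
  qed
  show "fv.independent (u ` S)"
  proof
    assume "fv.dependent (u ` S)"
    then obtain c where c: "\<exists>w\<in>u ` S. c w \<noteq> 0" "(\<Sum>w\<in>u ` S. (\<lambda>x. c w * w x)) = 0"
      using fv.dependent_finite[of "u ` S"] assms(1) by blast
    from c(1) obtain s0 where s0: "s0 \<in> S" "c (u s0) \<noteq> 0" by blast
    have "0 = (\<Sum>w\<in>u ` S. (\<lambda>x. c w * w x)) s0" using c(2) by simp
    also have "\<dots> = (\<Sum>s\<in>S. c (u s) * u s s0)" unfolding sum_fun_apply sumU by simp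
    also have "\<dots> = c (u s0)" using evalS[OF s0(1), of "\<lambda>s. c (u s)"] .
    finally show False using s0(2) by simp
  qed
qed

lemma span_map:
  fixes P :: "(nat \<Rightarrow> real) \<Rightarrow> (nat \<Rightarrow> real)"
  assumes "P 0 = 0" "\<And>x y. P (x + y) = P x + P y" "\<And>c x. P (\<lambda>p. c * x p) = (\<lambda>p. c * P x p)"
    and "v \<in> fv.span A"
  shows "P v \<in> fv.span (P ` A)"
  using assms(4)
proof (induction rule: fv.span_induct_alt)
  case base
  have "P 0 \<in> fv.span (P ` A)" using assms(1) fv.span_zero by simp
  then show ?case by (simp add: zero_fun_def)
next
  case (step c x y)
  have "P ((\<lambda>p. c * x p) + y) = (\<lambda>p. c * P x p) + P y" using assms(2,3) by simp
  moreover have "(\<lambda>p. c * P x p) \<in> fv.span (P ` A)"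
    using fv.span_scale[OF fv.span_base[of "P x" "P ` A"]] step(1) by blast
  ultimately show ?case using fv.span_add step(2) by metis
qed

lemma tidx_iff: "i \<in> tidx N I \<longleftrightarrow> (\<forall>k<N. i k < I k) \<and> (\<forall>k. N \<le> k \<longrightarrow> i k = undefined)"
  by (auto simp: tidx_def PiE_def extensional_def Pi_def)

lemma tidx_upd: "i \<in> tidx N I \<Longrightarrow> k < N \<Longrightarrow> p < I k \<Longrightarrow> i(k := p) \<in> tidx N I"
  by (auto simp: tidx_iff)

lemma finite_tidx: "finite (tidx N I)"
  unfolding tidx_def by (rule finite_PiE) auto

lemma fiber_set: "{fiber N I X k i | i. i \<in> tidx N I} = fiber N I X k ` tidx N I"
  by auto

lemma core:
  assumes N1: "N \<ge> 1" and I1: "\<forall>n<N. I n \<ge> 1" and nz: "\<exists>i\<in>tidx N I. X i \<noteq> 0"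
    and n0: "n0 < N"
  shows "\<exists>J Y. is_subtensor N I X J Y \<and> (\<forall>k<N. mode_rank N J Y k = mode_rank N I X k)
           \<and> J n0 = mode_rank N I X n0"
proof -
  define F where "F k = {fiber N I X k i | i. i \<in> tidx N I}" for k
  have finF: "finite (F k)" for k unfolding F_def fiber_set using finite_tidx by simp
  obtain B where B: "B \<subseteq> F n0" "fv.independent B" "F n0 \<subseteq> fv.span B" "card B = fv.dim (F n0)"
    using fv.basis_exists by blast
  have finB: "finite B" using B(1) finF finite_subset by blast
  have suppB: "\<forall>b\<in>B. \<forall>x\<ge>I n0. b x = 0"
    using B(1) unfolding F_def fiber_def by auto
  obtain S u where S: "S \<subseteq> {..<I n0}" "card S = card B" "\<forall>s\<in>S. u s \<in> fv.span B"
     "\<forall>s\<in>S. \<forall>t\<in>S. u s t = (if s = t then 1 else 0)"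
    using gauss[OF finB B(2) suppB] by blast
  have finS: "finite S" using S(1) finite_subset by blast
  define R where "R = card S"
  have Rrank: "R = mode_rank N I X n0"
    unfolding R_def S(2) B(4) mode_rank_def F_def ..
  have KEY: "X (i(n0 := t)) = (\<Sum>s\<in>S. X (i(n0 := s)) * u s t)"
    if i: "i \<in> tidx N I" and t: "t < I n0" for i t
  proof -
    have v: "fiber N I X n0 i \<in> fv.span B" using i B(3) unfolding F_def by blast
    have "fiber N I X n0 i t = (\<Sum>s\<in>S. fiber N I X n0 i s * u s t)"
      by (rule recon[OF finB B(2) finS S(2) S(3) S(4) v])
    moreover have "fiber N I X n0 i s = X (i(n0 := s))" if "s \<in> S" for s
      using that S(1) by (auto simp: fiber_def)
    ultimately show ?thesis using t by (simp add: fiber_def)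
  qed
  have R1: "R \<ge> 1"
  proof (rule ccontr)
    assume "\<not> R \<ge> 1"
    then have "S = {}" using finS R_def by (simp add: Suc_le_eq card_gt_0_iff)
    obtain i0 where i0: "i0 \<in> tidx N I" "X i0 \<noteq> 0" using nz by blast
    have "i0 n0 < I n0" using i0(1) n0 by (simp add: tidx_iff)
    from KEY[OF i0(1) this] have "X i0 = 0" using \<open>S = {}\<close> by simp
    then show False using i0(2) by simp
  qed
  have RI: "R \<le> I n0" unfolding R_def using card_mono[OF _ S(1)] by simp
  define \<sigma> where "\<sigma> = enumerate S"
  have bij: "bij_betw \<sigma> {..<R} S" unfolding \<sigma>_def R_def by (rule finite_bij_enumerate[OF finS])
  have \<sigma>S: "q < R \<Longrightarrow> \<sigma> q \<in> S" for q using bij by (auto simp: bij_betw_def)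
  have \<sigma>I: "q < R \<Longrightarrow> \<sigma> q < I n0" for q using \<sigma>S S(1) by auto
  have \<sigma>inj: "q < R \<Longrightarrow> q' < R \<Longrightarrow> \<sigma> q = \<sigma> q' \<longleftrightarrow> q = q'" for q q'
    using bij by (auto simp: bij_betw_def inj_on_def)
  have \<sigma>surj: "s \<in> S \<Longrightarrow> \<exists>q<R. \<sigma> q = s" for s
    using bij by (auto simp: bij_betw_def)
  define J where "J = I(n0 := R)"
  define Y where "Y = (\<lambda>j. X (j(n0 := \<sigma> (j n0))))"
  have JleI: "J k \<le> I k" for k using RI by (simp add: J_def)
  have JI: "j \<in> tidx N I" if "j \<in> tidx N J" for j
    using that JleI less_le_trans unfolding tidx_iff by blast
  have JI2: "j \<in> tidx N J \<Longrightarrow> j(n0 := \<sigma> (j n0)) \<in> tidx N I" for j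
    using n0 \<sigma>I JI by (auto simp: tidx_iff J_def)
  have sub: "is_subtensor N I X J Y"
    unfolding is_subtensor_def
  proof (intro exI[of _ "\<lambda>k. if k = n0 then \<sigma> else id"] conjI allI impI ballI)
    fix n assume n: "n < N"
    show "1 \<le> J n" using R1 I1 n by (simp add: J_def)
    show "J n \<le> I n" using RI by (simp add: J_def)
    show "strict_mono_on {..<J n} (if n = n0 then \<sigma> else id)"
      using finite_enumerate_mono[OF _ finS] by (auto simp: strict_mono_on_def J_def \<sigma>_def R_def)
    show "(if n = n0 then \<sigma> else id) ` {..<J n} \<subseteq> {..<I n}"
      using \<sigma>I by (auto simp: J_def)
  next
    fix j assume j: "j \<in> tidx N J"
    have "(\<lambda>n\<in>{..<N}. (if n = n0 then \<sigma> else id) (j n)) = j(n0 := \<sigma> (j n0))"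
      using j n0 by (auto simp: fun_eq_iff tidx_iff)
    then show "Y j = X (\<lambda>n\<in>{..<N}. (if n = n0 then \<sigma> else id) (j n))"
      by (simp add: Y_def)
  qed
  have finJ: "finite {fiber N J Y k j | j. j \<in> tidx N J}" for k
    unfolding fiber_set using finite_tidx by simp
  have ranks: "mode_rank N J Y k = mode_rank N I X k" if k: "k < N" for k
  proof (cases "k = n0")
    case False
    define F' where "F' = {fiber N J Y k j | j. j \<in> tidx N J}"
    have FYX: "fiber N J Y k j = fiber N I X k (j(n0 := \<sigma> (j n0)))" for j
      using False by (auto simp: fiber_def fun_eq_iff J_def Y_def fun_upd_twist)
    have A: "F' \<subseteq> F k"
      unfolding F'_def F_def using FYX JI2 by blast
    have Bm: "fiber N I X k (i(n0 := s)) \<in> F'" if i: "i \<in> tidx N I" and s: "s \<in> S" for i s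
    proof -
      obtain q where q: "q < R" "\<sigma> q = s" using \<sigma>surj[OF s] by blast
      have j: "i(n0 := q) \<in> tidx N J"
        using i q(1) n0 unfolding tidx_iff J_def by auto
      have "fiber N J Y k (i(n0 := q)) = fiber N I X k (i(n0 := s))"
        using FYX q(2) by simp
      then show ?thesis unfolding F'_def using j
        by (intro CollectI exI[of _ "i(n0 := q)"]) simp
    qed
    have C: "fiber N I X k i = (\<Sum>s\<in>S. (\<lambda>x. u s (i n0) * fiber N I X k (i(n0 := s)) x))"
      if i: "i \<in> tidx N I" for i
    proof (rule ext)
      fix p
      show "fiber N I X k i p = (\<Sum>s\<in>S. (\<lambda>x. u s (i n0) * fiber N I X k (i(n0 := s)) x)) p"
      proof (cases "p < I k")
        case True
        have i': "i(k := p) \<in> tidx N I" by (rule tidx_upd[OF i k True])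
        have t: "i n0 < I n0" using i n0 by (simp add: tidx_iff)
        have "X (i(k := p)) = X ((i(k := p))(n0 := i n0))"
          using False by (metis fun_upd_other fun_upd_triv)
        also have "\<dots> = (\<Sum>s\<in>S. X ((i(k := p))(n0 := s)) * u s (i n0))"
          using KEY[OF i' t] .
        finally show ?thesis using True False
          by (simp add: sum_fun_apply fiber_def fun_upd_twist mult.commute)
      next
        case False
        then show ?thesis by (simp add: sum_fun_apply fiber_def)
      qed
    qed
    have "F k \<subseteq> fv.span F'"
    proof
      fix f assume "f \<in> F k"
      then obtain i where i: "i \<in> tidx N I" "f = fiber N I X k i" unfolding F_def by blast
      show "f \<in> fv.span F'"
        unfolding i(2) C[OF i(1)]
        by (rule fv.span_sum) (use Bm[OF i(1)] in \<open>auto intro: fv.span_scale fv.span_base\<close>)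
    qed
    then have le1: "fv.dim (F k) \<le> fv.dim F'"
      using fv_dim_mono finJ F'_def by blast
    have le2: "fv.dim F' \<le> fv.dim (F k)"
      using fv_dim_mono[OF finF] A fv.span_superset by blast
    show ?thesis using le1 le2 unfolding mode_rank_def F_def F'_def by simp
  next
    case True
    define F' where "F' = {fiber N J Y n0 j | j. j \<in> tidx N J}"
    have FY0: "fiber N J Y n0 j = (\<lambda>p. if p < R then X (j(n0 := \<sigma> p)) else 0)" for j
      by (auto simp: fiber_def fun_eq_iff J_def Y_def)
    define e where "e q = (\<lambda>x. if x = q then (1::real) else 0)" for q :: nat
    have ed: "\<forall>s\<in>{..<R}. \<forall>t\<in>{..<R}. e s t = (if s = t then 1 else 0)"
      by (simp add: e_def)
    have indE: "fv.independent (e ` {..<R})" and injE: "inj_on e {..<R}"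
      using delta_indep[OF _ ed] by auto
    have cardE: "card (e ` {..<R}) = R" using card_image[OF injE] by simp
    have up: "F' \<subseteq> fv.span (e ` {..<R})"
    proof
      fix f assume "f \<in> F'"
      then obtain j where f: "f = (\<lambda>p. if p < R then X (j(n0 := \<sigma> p)) else 0)"
        unfolding F'_def FY0 by blast
      have "f = (\<Sum>q\<in>{..<R}. (\<lambda>x. f q * e q x))"
      proof (rule ext)
        fix x
        have "(\<Sum>q\<in>{..<R}. (\<lambda>x. f q * e q x)) x = (\<Sum>q\<in>{..<R}. if q = x then f q else 0)"
          unfolding sum_fun_apply by (intro sum.cong) (auto simp: e_def)
        also have "\<dots> = f x" by (simp add: f)
        finally show "f x = (\<Sum>q\<in>{..<R}. (\<lambda>x. f q * e q x)) x" by simp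
      qed
      also have "\<dots> \<in> fv.span (e ` {..<R})"
        by (rule fv.span_sum) (auto intro: fv.span_scale fv.span_base)
      finally show "f \<in> fv.span (e ` {..<R})" .
    qed
    have le1: "fv.dim F' \<le> R"
      using fv.dim_le_card[OF up] cardE by simp
    define P where "P v = (\<lambda>p. if p < R then v (\<sigma> p) else 0)" for v :: "nat \<Rightarrow> real"
    have PF: "P ` F n0 \<subseteq> F'"
    proof
      fix g assume "g \<in> P ` F n0"
      then obtain i where i: "i \<in> tidx N I" "g = P (fiber N I X n0 i)" unfolding F_def by blast
      have j: "i(n0 := 0) \<in> tidx N J"
        using i(1) R1 n0 unfolding tidx_iff J_def by auto
      have "g = fiber N J Y n0 (i(n0 := 0))"
        unfolding i(2) FY0 using \<sigma>I by (auto simp: P_def fiber_def fun_eq_iff)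
      then show "g \<in> F'" unfolding F'_def using j by blast
    qed
    have lo: "e ` {..<R} \<subseteq> fv.span F'"
    proof
      fix w assume "w \<in> e ` {..<R}"
      then obtain q where q: "q < R" "w = e q" by blast
      have us: "u (\<sigma> q) \<in> fv.span (F n0)"
        using S(3) \<sigma>S[OF q(1)] fv.span_mono[OF B(1)] by blast
      have "P (u (\<sigma> q)) \<in> fv.span (P ` F n0)"
        by (rule span_map[OF _ _ _ us]) (auto simp: P_def fun_eq_iff)
      also have "\<dots> \<subseteq> fv.span F'" using fv.span_mono[OF PF] .
      finally have "P (u (\<sigma> q)) \<in> fv.span F'" .
      moreover have "P (u (\<sigma> q)) = e q"
        using S(4) \<sigma>S q(1) \<sigma>inj by (auto simp: P_def e_def fun_eq_iff)
      ultimately show "w \<in> fv.span F'" using q(2) by simp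
    qed
    have le2: "R \<le> fv.dim F'"
      using fv_indep_le_dim[OF _ indE lo] finJ cardE F'_def by simp
    show ?thesis using le1 le2 Rrank True unfolding mode_rank_def F'_def by simp
  qed
  have "J n0 = mode_rank N I X n0" using Rrank n0 by (simp add: J_def)
  then show ?thesis using sub ranks by blast
qed

theorem corollary3p6:
  fixes N :: nat and I :: "nat \<Rightarrow> nat" and X :: "(nat \<Rightarrow> nat) \<Rightarrow> real"
    and r :: "nat \<Rightarrow> (nat \<Rightarrow> nat) \<Rightarrow> ((nat \<Rightarrow> nat) \<Rightarrow> real) \<Rightarrow> nat"
  assumes "N \<ge> 1"
    and "\<forall>n<N. I n \<ge> 1"
    and "\<exists>i\<in>tidx N I. X i \<noteq> 0"
    and "r = max_rank \<or> r = submax_rank"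
  shows "\<exists>J Y. is_subtensor N I X J Y \<and> r N I X = r N J Y \<and> (\<exists>n<N. r N J Y = J n)"
proof -
  obtain n0 where n0: "n0 < N" "r N I X = mode_rank N I X n0"
    using r_attained[OF assms(1) assms(4)] by blast
  obtain J Y where JY: "is_subtensor N I X J Y" "\<forall>k<N. mode_rank N J Y k = mode_rank N I X k"
      "J n0 = mode_rank N I X n0"
    using core[OF assms(1-3) n0(1)] by blast
  have "r N J Y = r N I X"
    using assms(4) r_cong[OF JY(2) assms(1)] by auto
  then show ?thesis using JY n0 by metis
qed

end
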